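(* Let $(G,O)$ be an equipped group and $s_1,s_2\in S(G,O)$. The following are equivalent: (i) $s_1$ and $s_2$ are $r$-equivalent; (ii) $s_1$ and $s_2$ are $l$-equivalent; (iii) $s_1$ and $s_2$ are equivalent.
   Context: An equipped group is a pair $(G,O)$, $G$ a group, $O\subset G$ a union of finitely many conjugacy classes, $1\notin O$. The factorization semigroup $S(G,O)$ is generated by symbols $x_g$, $g\in O$, subject to $x_{g_1}x_{g_2}=x_{g_2}x_{g_2^{-1}g_1g_2}=x_{g_1g_2g_1^{-1}}x_{g_1}$ ($g_1,g_2\in O$). Elements $s_1,s_2$ of a semigroup $S$ are $r$-equivalent (resp. $l$-equivalent) if there is $s_3\in S$ with $s_1s_3=s_2s_3$ (resp. $s_3s_1=s_3s_2$), and equivalent if there are $s_3,s_4\in S$ with $s_3s_1s_4=s_3s_2s_4$. *)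

theory Defs
  imports "HOL-Algebra.Group"
begin

definition conj_class :: "('a, 'b) monoid_scheme \<Rightarrow> 'a \<Rightarrow> 'a set" where
  "conj_class G g = {h \<otimes>\<^bsub>G\<^esub> g \<otimes>\<^bsub>G\<^esub> inv\<^bsub>G\<^esub> h | h. h \<in> carrier G}"

definition equipped_group :: "('a, 'b) monoid_scheme \<Rightarrow> 'a set \<Rightarrow> bool" where
  "equipped_group G Ob \<longleftrightarrow> group G \<and> Ob \<subseteq> carrier G \<and> \<one>\<^bsub>G\<^esub> \<notin> Ob \<and>
     (\<exists>C. finite C \<and> C \<subseteq> carrier G \<and> Ob = (\<Union>g\<in>C. conj_class G g))"

(* Words in the generators x_g (g \<in> Ob) are represented as lists of elements of Ob.
   One elementary application of a defining relation of S(G,Ob) inside a word. *)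
inductive fact_step :: "('a, 'b) monoid_scheme \<Rightarrow> 'a set \<Rightarrow> 'a list \<Rightarrow> 'a list \<Rightarrow> bool"
  for G Ob where
  rel1: "g1 \<in> Ob \<Longrightarrow> g2 \<in> Ob \<Longrightarrow>
     fact_step G Ob (u @ [g1, g2] @ v) (u @ [g2, inv\<^bsub>G\<^esub> g2 \<otimes>\<^bsub>G\<^esub> g1 \<otimes>\<^bsub>G\<^esub> g2] @ v)"
| rel2: "g1 \<in> Ob \<Longrightarrow> g2 \<in> Ob \<Longrightarrow>
     fact_step G Ob (u @ [g1, g2] @ v) (u @ [g1 \<otimes>\<^bsub>G\<^esub> g2 \<otimes>\<^bsub>G\<^esub> inv\<^bsub>G\<^esub> g1, g1] @ v)"

definition fact_eq :: "('a, 'b) monoid_scheme \<Rightarrow> 'a set \<Rightarrow> 'a list \<Rightarrow> 'a list \<Rightarrow> bool" where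
  "fact_eq G Ob = equivclp (fact_step G Ob)"

(* Elements of S(G,Ob): (classes of) nonempty words in the generators x_g, g \<in> Ob. *)
definition fact_word :: "'a set \<Rightarrow> 'a list \<Rightarrow> bool" where
  "fact_word Ob w \<longleftrightarrow> w \<noteq> [] \<and> set w \<subseteq> Ob"

definition r_equiv :: "('a, 'b) monoid_scheme \<Rightarrow> 'a set \<Rightarrow> 'a list \<Rightarrow> 'a list \<Rightarrow> bool" where
  "r_equiv G Ob s1 s2 \<longleftrightarrow> (\<exists>s3. fact_word Ob s3 \<and> fact_eq G Ob (s1 @ s3) (s2 @ s3))"

definition l_equiv :: "('a, 'b) monoid_scheme \<Rightarrow> 'a set \<Rightarrow> 'a list \<Rightarrow> 'a list \<Rightarrow> bool" where
  "l_equiv G Ob s1 s2 \<longleftrightarrow> (\<exists>s3. fact_word Ob s3 \<and> fact_eq G Ob (s3 @ s1) (s3 @ s2))"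

definition s_equiv :: "('a, 'b) monoid_scheme \<Rightarrow> 'a set \<Rightarrow> 'a list \<Rightarrow> 'a list \<Rightarrow> bool" where
  "s_equiv G Ob s1 s2 \<longleftrightarrow> (\<exists>s3 s4. fact_word Ob s3 \<and> fact_word Ob s4 \<and>
       fact_eq G Ob (s3 @ s1 @ s4) (s3 @ s2 @ s4))"

end

theory Submission
  imports Defs
begin

lemma fact_eq_cong:
  assumes "fact_eq G Ob x y"
  shows "fact_eq G Ob (p @ x @ q) (p @ y @ q)"
proof -
  have st: "fact_step G Ob (p @ a @ q) (p @ b @ q)" if "fact_step G Ob a b" for a b
    using that
  proof cases
    case (rel1 g1 g2 u v)
    then show ?thesis using fact_step.rel1[of g1 Ob g2 G "p@u" "v@q"] by simp
  next
    case (rel2 g1 g2 u v)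
    then show ?thesis using fact_step.rel2[of g1 Ob g2 G "p@u" "v@q"] by simp
  qed
  from assms[unfolded fact_eq_def] show ?thesis unfolding fact_eq_def
  proof (induction rule: equivclp_induct)
    case base then show ?case by simp
  next
    case (step y z)
    then show ?case using st equivclp_into_equivclp by metis
  qed
qed

lemma fact_eq_trans: "fact_eq G Ob a b \<Longrightarrow> fact_eq G Ob b c \<Longrightarrow> fact_eq G Ob a c"
  unfolding fact_eq_def by (rule equivclp_trans)

lemma fact_eq_sym: "fact_eq G Ob a b \<Longrightarrow> fact_eq G Ob b a"
  unfolding fact_eq_def by (rule equivclp_sym)

definition cclosed :: "('a, 'b) monoid_scheme \<Rightarrow> 'a set \<Rightarrow> bool" where
  "cclosed G Ob \<longleftrightarrow> Ob \<subseteq> carrier G \<and>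
     (\<forall>g\<in>Ob. \<forall>a\<in>carrier G. a \<otimes>\<^bsub>G\<^esub> g \<otimes>\<^bsub>G\<^esub> inv\<^bsub>G\<^esub> a \<in> Ob)"

context group
begin

definition wprod :: "'a list \<Rightarrow> 'a" where
  "wprod w = foldr (\<otimes>) w \<one>"

lemma wprod_simps[simp]: "wprod [] = \<one>" "wprod (g # w) = g \<otimes> wprod w"
  by (simp_all add: wprod_def)

lemma inv_cancel_l: "a \<in> carrier G \<Longrightarrow> x \<in> carrier G \<Longrightarrow> inv a \<otimes> (a \<otimes> x) = x"
  by (simp add: m_assoc[symmetric])

lemma wprod_carrier[simp]: "set w \<subseteq> carrier G \<Longrightarrow> wprod w \<in> carrier G"
  by (induction w) auto

lemma wprod_append: "set u \<subseteq> carrier G \<Longrightarrow> set v \<subseteq> carrier G \<Longrightarrow>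
   wprod (u @ v) = wprod u \<otimes> wprod v"
  by (induction u) (auto simp: m_assoc)

lemma equipped_cclosed:
  assumes "equipped_group G Ob" shows "cclosed G Ob"
proof -
  from assms obtain C where C: "C \<subseteq> carrier G" "Ob = (\<Union>g\<in>C. conj_class G g)"
    and sub: "Ob \<subseteq> carrier G"
    unfolding equipped_group_def by blast
  have "a \<otimes> x \<otimes> inv a \<in> Ob" if "x \<in> Ob" "a \<in> carrier G" for x a
  proof -
    from that C obtain c h where c: "c \<in> C" "h \<in> carrier G" "x = h \<otimes> c \<otimes> inv h"
      unfolding conj_class_def by blast
    have "a \<otimes> x \<otimes> inv a = (a \<otimes> h) \<otimes> c \<otimes> inv (a \<otimes> h)"
      using c that C by (simp add: m_assoc inv_mult_group subsetD)
    then show ?thesis using c that C unfolding conj_class_def by blast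
  qed
  then show ?thesis using sub unfolding cclosed_def by blast
qed

lemma cclosed_inv:
  assumes "cclosed G Ob" "g \<in> Ob" "a \<in> carrier G"
  shows "inv a \<otimes> g \<otimes> a \<in> Ob"
  using assms unfolding cclosed_def
  by (metis inv_closed inv_inv)

lemma step_inv:
  assumes cc: "cclosed G Ob" and st: "fact_step G Ob x y"
  shows "(set x \<subseteq> Ob \<longleftrightarrow> set y \<subseteq> Ob) \<and> (set x \<subseteq> Ob \<longrightarrow> wprod x = wprod y)"
  using st
proof cases
  case (rel1 g1 g2 u v)
  have car: "Ob \<subseteq> carrier G" using cc unfolding cclosed_def by blast
  have c: "inv g2 \<otimes> g1 \<otimes> g2 \<in> Ob" using cclosed_inv[OF cc] rel1 car by blast
  have gc: "g1 \<in> carrier G" "g2 \<in> carrier G" using rel1 car by auto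
  have sets: "set x \<subseteq> Ob \<longleftrightarrow> set y \<subseteq> Ob" using rel1 c by auto
  moreover have "wprod x = wprod y" if xo: "set x \<subseteq> Ob"
  proof -
    have uc: "set u \<subseteq> carrier G" and vc: "set v \<subseteq> carrier G" using xo rel1 car by auto
    have vp: "wprod v \<in> carrier G" using vc by simp
    have e: "g2 \<otimes> ((inv g2 \<otimes> g1 \<otimes> g2) \<otimes> wprod v) = g1 \<otimes> (g2 \<otimes> wprod v)"
      using gc vp by (simp add: m_assoc[symmetric])
    have "wprod x = wprod u \<otimes> wprod ([g1, g2] @ v)"
      using rel1 uc vc gc by (simp add: wprod_append del: append.simps)
    also have "\<dots> = wprod u \<otimes> (g1 \<otimes> (g2 \<otimes> wprod v))" by simp
    also have "\<dots> = wprod u \<otimes> wprod ([g2, inv g2 \<otimes> g1 \<otimes> g2] @ v)" using e by simp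
    also have "\<dots> = wprod y"
      using rel1 uc vc gc by (simp add: wprod_append del: append.simps)
    finally show ?thesis .
  qed
  ultimately show ?thesis by blast
next
  case (rel2 g1 g2 u v)
  have car: "Ob \<subseteq> carrier G" using cc unfolding cclosed_def by blast
  have c: "g1 \<otimes> g2 \<otimes> inv g1 \<in> Ob" using cc rel2 car unfolding cclosed_def by blast
  have gc: "g1 \<in> carrier G" "g2 \<in> carrier G" using rel2 car by auto
  have sets: "set x \<subseteq> Ob \<longleftrightarrow> set y \<subseteq> Ob" using rel2 c by auto
  moreover have "wprod x = wprod y" if xo: "set x \<subseteq> Ob"
  proof -
    have uc: "set u \<subseteq> carrier G" and vc: "set v \<subseteq> carrier G" using xo rel2 car by auto
    have vp: "wprod v \<in> carrier G" using vc by simp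
    have e: "(g1 \<otimes> g2 \<otimes> inv g1) \<otimes> (g1 \<otimes> wprod v) = g1 \<otimes> (g2 \<otimes> wprod v)"
      using gc vp by (simp add: m_assoc) (simp add: m_assoc[symmetric])
    have "wprod x = wprod u \<otimes> wprod ([g1, g2] @ v)"
      using rel2 uc vc gc by (simp add: wprod_append del: append.simps)
    also have "\<dots> = wprod u \<otimes> (g1 \<otimes> (g2 \<otimes> wprod v))" by simp
    also have "\<dots> = wprod u \<otimes> wprod ([g1 \<otimes> g2 \<otimes> inv g1, g1] @ v)" using e by simp
    also have "\<dots> = wprod y"
      using rel2 uc vc gc by (simp add: wprod_append del: append.simps)
    finally show ?thesis .
  qed
  ultimately show ?thesis by blast
qed

lemma fact_eq_wprod:
  assumes cc: "cclosed G Ob" and e: "fact_eq G Ob x y" and x: "set x \<subseteq> Ob"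
  shows "set y \<subseteq> Ob \<and> wprod x = wprod y"
  using e[unfolded fact_eq_def] x
proof (induction rule: equivclp_induct)
  case base then show ?case by simp
next
  case (step y z)
  then show ?case using step_inv[OF cc] by metis
qed

lemma swap1:
  assumes cc: "cclosed G Ob" and g: "g \<in> Ob" and w: "set w \<subseteq> Ob"
  shows "fact_eq G Ob ([g] @ w) (w @ [inv (wprod w) \<otimes> g \<otimes> wprod w])"
  using g w
proof (induction w arbitrary: g)
  case Nil
  have "g \<in> carrier G" using Nil cc unfolding cclosed_def by blast
  then show ?case by (simp add: fact_eq_def)
next
  case (Cons h w)
  have car: "Ob \<subseteq> carrier G" using cc unfolding cclosed_def by blast
  have hc: "h \<in> carrier G" "g \<in> carrier G" using Cons car by auto
  have wc: "wprod w \<in> carrier G" using Cons car by auto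
  have g': "inv h \<otimes> g \<otimes> h \<in> Ob" using cclosed_inv[OF cc] Cons hc by blast
  have s1: "fact_eq G Ob ([g] @ (h # w)) ([h] @ [inv h \<otimes> g \<otimes> h] @ w)"
    unfolding fact_eq_def
    using fact_step.rel1[of g Ob h G "[]" w] Cons by auto
  have s2: "fact_eq G Ob ([h] @ ([inv h \<otimes> g \<otimes> h] @ w) @ [])
      ([h] @ (w @ [inv (wprod w) \<otimes> (inv h \<otimes> g \<otimes> h) \<otimes> wprod w]) @ [])"
    by (rule fact_eq_cong[OF Cons.IH[OF g']]) (use Cons in auto)
  have eq: "inv (wprod w) \<otimes> (inv h \<otimes> g \<otimes> h) \<otimes> wprod w
      = inv (wprod (h # w)) \<otimes> g \<otimes> wprod (h # w)"
    using hc wc by (simp add: inv_mult_group m_assoc)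
  show ?case using fact_eq_trans[OF s1] s2 eq by simp
qed

lemma swapw:
  assumes cc: "cclosed G Ob" and t: "set t \<subseteq> Ob" and w: "set w \<subseteq> Ob"
  shows "fact_eq G Ob (t @ w) (w @ map (\<lambda>g. inv (wprod w) \<otimes> g \<otimes> wprod w) t)"
  using t
proof (induction t)
  case Nil then show ?case by (simp add: fact_eq_def)
next
  case (Cons g t)
  let ?f = "\<lambda>g. inv (wprod w) \<otimes> g \<otimes> wprod w"
  have s1: "fact_eq G Ob ([g] @ (t @ w) @ []) ([g] @ (w @ map ?f t) @ [])"
    by (rule fact_eq_cong) (use Cons in auto)
  have s2: "fact_eq G Ob ([] @ ([g] @ w) @ map ?f t) ([] @ (w @ [?f g]) @ map ?f t)"
    by (rule fact_eq_cong[OF swap1[OF cc]]) (use Cons w in auto)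
  show ?case using fact_eq_trans[OF s1] s2 by simp
qed

lemma swapw2:
  assumes cc: "cclosed G Ob" and t: "set t \<subseteq> Ob" and w: "set w \<subseteq> Ob"
  shows "fact_eq G Ob (w @ t) (map (\<lambda>g. wprod w \<otimes> g \<otimes> inv (wprod w)) t @ w)"
proof -
  have car: "Ob \<subseteq> carrier G" using cc unfolding cclosed_def by blast
  have wc: "wprod w \<in> carrier G" using w car by auto
  let ?t' = "map (\<lambda>g. wprod w \<otimes> g \<otimes> inv (wprod w)) t"
  have t': "set ?t' \<subseteq> Ob" using t wc cc unfolding cclosed_def by auto
  have "map (\<lambda>g. inv (wprod w) \<otimes> g \<otimes> wprod w) ?t' = t"
    using t car wc by (induction t) (auto simp: m_assoc subsetD inv_cancel_l)
  then show ?thesis using swapw[OF cc t' w] fact_eq_sym by metis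
qed

lemma main_group:
  assumes "equipped_group G Ob"
    and "fact_word Ob s1" and "fact_word Ob s2"
  shows "(r_equiv G Ob s1 s2 \<longleftrightarrow> l_equiv G Ob s1 s2) \<and> (l_equiv G Ob s1 s2 \<longleftrightarrow> s_equiv G Ob s1 s2)"
proof -
  have cc: "cclosed G Ob" using equipped_cclosed assms(1) by blast
  have car: "Ob \<subseteq> carrier G" using cc unfolding cclosed_def by blast
  have w1: "set s1 \<subseteq> Ob" and w2: "set s2 \<subseteq> Ob" using assms(2,3) unfolding fact_word_def by auto
  have rs: "s_equiv G Ob s1 s2" if "r_equiv G Ob s1 s2"
  proof -
    from that obtain s3 where "fact_word Ob s3" "fact_eq G Ob (s1 @ s3) (s2 @ s3)"
      unfolding r_equiv_def by blast
    then show ?thesis unfolding s_equiv_def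
      using fact_eq_cong[of G Ob "s1 @ s3" "s2 @ s3" s1 "[]"] assms(2) by auto
  qed
  have ls: "s_equiv G Ob s1 s2" if "l_equiv G Ob s1 s2"
  proof -
    from that obtain s3 where "fact_word Ob s3" "fact_eq G Ob (s3 @ s1) (s3 @ s2)"
      unfolding l_equiv_def by blast
    then show ?thesis unfolding s_equiv_def
      using fact_eq_cong[of G Ob "s3 @ s1" "s3 @ s2" "[]" s1] assms(2) by auto
  qed
  have sr: "r_equiv G Ob s1 s2 \<and> l_equiv G Ob s1 s2" if "s_equiv G Ob s1 s2"
  proof -
    from that obtain s3 s4 where s3: "fact_word Ob s3" and s4: "fact_word Ob s4"
      and e: "fact_eq G Ob (s3 @ s1 @ s4) (s3 @ s2 @ s4)"
      unfolding s_equiv_def by blast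
    have s3o: "set s3 \<subseteq> Ob" and s4o: "set s4 \<subseteq> Ob" using s3 s4 unfolding fact_word_def by auto
    have "wprod (s3 @ s1 @ s4) = wprod (s3 @ s2 @ s4)"
      using fact_eq_wprod[OF cc e] s3o s4o w1 by auto
    moreover have c3: "set s3 \<subseteq> carrier G" and c4: "set s4 \<subseteq> carrier G"
      and c1: "set s1 \<subseteq> carrier G" and c2: "set s2 \<subseteq> carrier G"
      using s3o s4o w1 w2 car by auto
    ultimately have "wprod s3 \<otimes> (wprod s1 \<otimes> wprod s4) = wprod s3 \<otimes> (wprod s2 \<otimes> wprod s4)"
      by (simp add: wprod_append)
    hence pe: "wprod s1 = wprod s2"
      using c1 c2 c3 c4 by simp
    let ?t = "map (\<lambda>g. inv (wprod s1) \<otimes> g \<otimes> wprod s1) s3"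
    let ?t' = "map (\<lambda>g. wprod s1 \<otimes> g \<otimes> inv (wprod s1)) s4"
    have p1: "wprod s1 \<in> carrier G" using w1 car by auto
    have tO: "set ?t \<subseteq> Ob" using s3o cclosed_inv[OF cc] p1 by auto
    have t'O: "set ?t' \<subseteq> Ob" using s4o cc p1 unfolding cclosed_def by auto
    have a1: "fact_eq G Ob (s3 @ s1 @ s4) (s1 @ ?t @ s4)"
      using fact_eq_cong[OF swapw[OF cc s3o w1], of "[]" s4] by simp
    have a2: "fact_eq G Ob (s3 @ s2 @ s4) (s2 @ ?t @ s4)"
      using fact_eq_cong[OF swapw[OF cc s3o w2], of "[]" s4] pe by simp
    have r: "fact_eq G Ob (s1 @ (?t @ s4)) (s2 @ (?t @ s4))"
      using fact_eq_trans[OF fact_eq_sym[OF a1] fact_eq_trans[OF e a2]] by simp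
    have b1: "fact_eq G Ob (s3 @ s1 @ s4) (s3 @ ?t' @ s1)"
      using fact_eq_cong[OF swapw2[OF cc s4o w1], of s3 "[]"] by simp
    have b2: "fact_eq G Ob (s3 @ s2 @ s4) (s3 @ ?t' @ s2)"
      using fact_eq_cong[OF swapw2[OF cc s4o w2], of s3 "[]"] pe by simp
    have l: "fact_eq G Ob ((s3 @ ?t') @ s1) ((s3 @ ?t') @ s2)"
      using fact_eq_trans[OF fact_eq_sym[OF b1] fact_eq_trans[OF e b2]] by simp
    have fw1: "fact_word Ob (?t @ s4)" using tO s4 unfolding fact_word_def by auto
    have fw2: "fact_word Ob (s3 @ ?t')" using t'O s3 unfolding fact_word_def by auto
    show ?thesis unfolding r_equiv_def l_equiv_def using r l fw1 fw2 by blast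
  qed
  show ?thesis using rs ls sr by blast
qed


end

theorem lemma3p1:
  fixes G :: "('a, 'b) monoid_scheme" and Ob :: "'a set" and s1 s2 :: "'a list"
  assumes "equipped_group G Ob"
    and "fact_word Ob s1" and "fact_word Ob s2"
  shows "(r_equiv G Ob s1 s2 \<longleftrightarrow> l_equiv G Ob s1 s2) \<and> (l_equiv G Ob s1 s2 \<longleftrightarrow> s_equiv G Ob s1 s2)"
  using assms group.main_group unfolding equipped_group_def by metis

end
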